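(* For all $\alpha,\beta\in K\otimes\mathbb{C}$ and every integer $s\ge0$, $$(\alpha|\sigma^s(\beta_{\rm tw}))=\sum_{j=1}^3\sum_{p=1}^{a_j-1}\frac1{a_j}\eta_j^{ps}\chi_{j,p}(\alpha)\chi_{j,a_j-p}(\beta),\qquad \eta_j=e^{2\pi\mathbf{i}/a_j}.$$
   Context: Fix an integer $n\ge3$; $a_1=n-2$, $a_2=a_3=2$; $X=\mathbb{P}^1_{n-2,2,2}$ is the orbifold projective line with orbifold points of orders $n-2,2,2$. $K=\mathbb{Z}[L_1,L_2,L_3]/\langle L_i^{a_i}-L_j^{a_j},(L_i-1)(L_j-1):i\neq j\rangle$ is its $K$-ring, $L:=L_1^{n-2}$. $\mathrm{rk}$ is the ring map $L_i\mapsto1$; $\deg$ is additive with $\deg(1)=0$, $\deg(L_i)=1/a_i$, $\deg(EF)=\mathrm{rk}(E)\deg(F)+\mathrm{rk}(F)\deg(E)$; $\chi_{j,p}$ ($1\le j\le3$, $1\le p\le a_j-1$) is the ring map with $\chi_{j,p}(L_i)=e^{-2\pi\mathbf{i}p\delta_{j,i}/a_j}$; all extended linearly to $K\otimes\mathbb{C}$. The Euler pairing $\langle a,b\rangle=\chi(a^\vee\otimes b)$ equals $\frac1{2\pi}(\Psi(a),e^{\pi\mathbf{i}\theta}e^{\pi\mathbf{i}\rho}\Psi(b))$, where $H$ has basis $\phi_{0,0}=1,\phi_{0,1}=P,\phi_{i,p}$ (twisted sectors), pairing $(\phi_{0,0},\phi_{0,1})=1$, $(\phi_{i,p},\phi_{i,a_i-p})=1/a_i$,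 zero otherwise, $\theta(\phi_{0,0})=\frac12\phi_{0,0}$, $\theta(\phi_{0,1})=-\frac12\phi_{0,1}$, $\theta(\phi_{i,p})=(\frac12-\frac p{a_i})\phi_{i,p}$, $\rho\phi_{0,0}=\frac1{n-2}\phi_{0,1}$, $\rho$ zero on other basis vectors, and $\Psi(E)=\mathrm{rk}(E)(1-\frac{\gamma}{n-2}P)+2\pi\mathbf{i}\deg(E)P+\sum_{j,p}\Gamma(1-\frac p{a_j})\chi_{j,p}(E)\phi_{j,p}$, $\gamma=-\Gamma'(1)+(n-2)\log Q$. The intersection pairing is $(a|b)=\langle a,b\rangle+\langle b,a\rangle$. $\sigma:K\to K$ is multiplication by $T=L_1+L_2+L_3-L-1$. With $\kappa=2(n-2)$, $\beta_0=\frac1\kappa\sum_{s=0}^{\kappa-1}\sigma^s(\beta)$ and $\beta_{\rm tw}=\beta-\beta_0$. *)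

theory Defs
  imports "HOL-Analysis.Analysis" "HOL-Computational_Algebra.Polynomial"
begin

text \<open>Complex polynomials in the three variables L1 (outermost), L2, L3 (innermost).
  Elements of K \<otimes> C are represented by such polynomials (representatives modulo the
  defining ideal); all maps below are well defined on the quotient.\<close>
type_synonym kpoly = "complex poly poly poly"

definition ord_a :: "nat \<Rightarrow> nat \<Rightarrow> nat" where
  "ord_a n i = (if i = 1 then n - 2 else 2)"

definition Lvar :: "nat \<Rightarrow> kpoly" where
  "Lvar i = (if i = 1 then [:0, 1:] else if i = 2 then [:[:0, 1:]:] else [:[:[:0, 1:]:]:])"

definition cst :: "complex \<Rightarrow> kpoly" where
  "cst c = [:[:[:c:]:]:]"

definition ev3 :: "kpoly \<Rightarrow> complex \<Rightarrow> complex \<Rightarrow> complex \<Rightarrow> complex" where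
  "ev3 f x y z = poly (map_poly (\<lambda>q. poly (map_poly (\<lambda>r. poly r z) q) y) f) x"

definition pdL :: "nat \<Rightarrow> kpoly \<Rightarrow> kpoly" where
  "pdL i f = (if i = 1 then pderiv f else if i = 2 then map_poly pderiv f
              else map_poly (map_poly pderiv) f)"

definition rk :: "kpoly \<Rightarrow> complex" where
  "rk f = ev3 f 1 1 1"

definition dg :: "nat \<Rightarrow> kpoly \<Rightarrow> complex" where
  "dg n f = (\<Sum>i\<in>{1,2,3::nat}. (1 / of_nat (ord_a n i)) * ev3 (pdL i f) 1 1 1)"

definition chiv :: "nat \<Rightarrow> nat \<Rightarrow> nat \<Rightarrow> nat \<Rightarrow> complex" where
  "chiv n j p i = (if i = j then exp (- 2 * of_real pi * \<i> * of_nat p / of_nat (ord_a n j)) else 1)"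

definition chi :: "nat \<Rightarrow> nat \<Rightarrow> nat \<Rightarrow> kpoly \<Rightarrow> complex" where
  "chi n j p f = ev3 f (chiv n j p 1) (chiv n j p 2) (chiv n j p 3)"

definition gam :: "nat \<Rightarrow> real \<Rightarrow> complex" where
  "gam n Q = of_real (- deriv (Gamma :: real \<Rightarrow> real) 1 + real (n - 2) * ln Q)"

text \<open>Vectors of H: coordinates w.r.t. the basis phi_{0,0}, phi_{0,1}, phi_{j,p}
  (1 \<le> j \<le> 3, 1 \<le> p \<le> a_j - 1), indexed by pairs.\<close>
type_synonym hvec = "nat \<times> nat \<Rightarrow> complex"

definition Psi :: "nat \<Rightarrow> real \<Rightarrow> kpoly \<Rightarrow> hvec" where
  "Psi n Q E = (\<lambda>(j, p).
     if j = 0 \<and> p = 0 then rk E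
     else if j = 0 \<and> p = 1 then - rk E * gam n Q / of_nat (n - 2) + 2 * of_real pi * \<i> * dg n E
     else if j \<in> {1,2,3} \<and> 1 \<le> p \<and> p < ord_a n j then
       Gamma (of_real (1 - real p / real (ord_a n j))) * chi n j p E
     else 0)"

definition Hpair :: "nat \<Rightarrow> hvec \<Rightarrow> hvec \<Rightarrow> complex" where
  "Hpair n u v = u (0,0) * v (0,1) + u (0,1) * v (0,0)
     + (\<Sum>j\<in>{1,2,3::nat}. \<Sum>p\<in>{1..<ord_a n j}.
          (1 / of_nat (ord_a n j)) * u (j, p) * v (j, ord_a n j - p))"

definition theta_ev :: "nat \<Rightarrow> nat \<times> nat \<Rightarrow> real" where
  "theta_ev n x = (case x of (j, p) \<Rightarrow>
     if j = 0 then (if p = 0 then 1/2 else - 1/2) else 1/2 - real p / real (ord_a n j))"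

definition expTheta :: "nat \<Rightarrow> hvec \<Rightarrow> hvec" where
  "expTheta n v = (\<lambda>x. exp (of_real pi * \<i> * of_real (theta_ev n x)) * v x)"

definition rho :: "nat \<Rightarrow> hvec \<Rightarrow> hvec" where
  "rho n v = (\<lambda>x. if x = (0,1) then v (0,0) / of_nat (n - 2) else 0)"

text \<open>e^{pi i rho} = id + pi i rho, since rho^2 = 0.\<close>
definition expRho :: "nat \<Rightarrow> hvec \<Rightarrow> hvec" where
  "expRho n v = (\<lambda>x. v x + of_real pi * \<i> * rho n v x)"

definition euler :: "nat \<Rightarrow> real \<Rightarrow> kpoly \<Rightarrow> kpoly \<Rightarrow> complex" where
  "euler n Q a b = (1 / (2 * of_real pi)) * Hpair n (Psi n Q a) (expTheta n (expRho n (Psi n Q b)))"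

definition ipair :: "nat \<Rightarrow> real \<Rightarrow> kpoly \<Rightarrow> kpoly \<Rightarrow> complex" where
  "ipair n Q a b = euler n Q a b + euler n Q b a"

definition Tcls :: "nat \<Rightarrow> kpoly" where
  "Tcls n = Lvar 1 + Lvar 2 + Lvar 3 - Lvar 1 ^ (n - 2) - 1"

definition sigma :: "nat \<Rightarrow> kpoly \<Rightarrow> kpoly" where
  "sigma n f = Tcls n * f"

definition kappa :: "nat \<Rightarrow> nat" where
  "kappa n = 2 * (n - 2)"

definition beta0 :: "nat \<Rightarrow> kpoly \<Rightarrow> kpoly" where
  "beta0 n b = cst (1 / of_nat (kappa n)) * (\<Sum>s<kappa n. (sigma n ^^ s) b)"

definition beta_tw :: "nat \<Rightarrow> kpoly \<Rightarrow> kpoly" where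
  "beta_tw n b = b - beta0 n b"

definition eta :: "nat \<Rightarrow> nat \<Rightarrow> complex" where
  "eta n j = exp (2 * of_real pi * \<i> / of_nat (ord_a n j))"

end

theory Submission
  imports Defs
begin

lemma map_poly_add_hom:
  assumes "h 0 = 0" "\<And>a b. h (a+b) = h a + h b"
  shows "map_poly h (p+q) = map_poly h p + map_poly h q"
  by (rule poly_eqI) (simp add: coeff_map_poly assms)

lemma poly_map_mult_hom:
  fixes h :: "'a::comm_ring_1 \<Rightarrow> 'b::comm_ring_1"
  assumes h0: "h 0 = 0" and ha: "\<And>a b. h (a+b) = h a + h b" and hm: "\<And>a b. h (a*b) = h a * h b"
  shows "poly (map_poly h (p*q)) x = poly (map_poly h p) x * poly (map_poly h q) x"
proof (induct p rule: pCons_induct)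
  case 0
  then show ?case by (simp add: h0)
next
  case (pCons a p)
  have "map_poly h (pCons a p * q) = smult (h a) (map_poly h q) + pCons 0 (map_poly h (p*q))"
    by (simp add: map_poly_add_hom[OF h0 ha] map_poly_smult[OF h0 hm] map_poly_pCons h0)
  then show ?case using pCons(2) by (simp add: map_poly_pCons h0 algebra_simps)
qed

lemma poly_map_add_hom:
  assumes "h 0 = 0" "\<And>a b. h (a+b) = h a + h b"
  shows "poly (map_poly h (p+q)) x = poly (map_poly h p) x + poly (map_poly h q) x"
  by (simp add: map_poly_add_hom[OF assms])

definition h1 :: "complex \<Rightarrow> complex poly \<Rightarrow> complex" where "h1 z r = poly r z"
definition h2 :: "complex \<Rightarrow> complex \<Rightarrow> complex poly poly \<Rightarrow> complex" where
  "h2 y z q = poly (map_poly (h1 z) q) y"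

lemma h1_hom: "h1 z 0 = 0" "h1 z (a+b) = h1 z a + h1 z b" "h1 z (a*b) = h1 z a * h1 z b"
  by (simp_all add: h1_def)

lemma h2_hom: "h2 y z 0 = 0" "h2 y z (a+b) = h2 y z a + h2 y z b" "h2 y z (a*b) = h2 y z a * h2 y z b"
  by (simp_all add: h2_def poly_map_add_hom[OF h1_hom(1,2)] poly_map_mult_hom[OF h1_hom])

lemma ev3_alt: "ev3 f x y z = poly (map_poly (h2 y z) f) x"
  unfolding ev3_def h2_def h1_def by simp

lemma ev3_add: "ev3 (f+g) x y z = ev3 f x y z + ev3 g x y z"
  by (simp add: ev3_alt poly_map_add_hom[OF h2_hom(1,2)])

lemma ev3_mult: "ev3 (f*g) x y z = ev3 f x y z * ev3 g x y z"
  by (simp add: ev3_alt poly_map_mult_hom[OF h2_hom])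

lemma ev3_0: "ev3 0 x y z = 0"
  by (simp add: ev3_def)

lemma ev3_diff: "ev3 (f-g) x y z = ev3 f x y z - ev3 g x y z"
proof -
  have "ev3 (f-g) x y z + ev3 g x y z = ev3 f x y z" by (simp flip: ev3_add)
  then show ?thesis by (simp add: algebra_simps)
qed

lemma ev3_cst: "ev3 (cst c) x y z = c"
  by (simp add: ev3_def cst_def map_poly_pCons)

lemma ev3_1: "ev3 1 x y z = 1"
  using ev3_cst[of 1] by (simp add: cst_def one_pCons)

lemma ev3_pow: "ev3 (f^k) x y z = ev3 f x y z ^ k"
  by (induct k) (simp_all add: ev3_1 ev3_mult)

lemma ev3_sum: "ev3 (\<Sum>i\<in>A. f i) x y z = (\<Sum>i\<in>A. ev3 (f i) x y z)"
  by (induct A rule: infinite_finite_induct) (simp_all add: ev3_0 ev3_add)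

lemma ev3_L1: "ev3 (Lvar 1) x y z = x" by (simp add: ev3_def Lvar_def map_poly_pCons)
lemma ev3_L2: "ev3 (Lvar 2) x y z = y" by (simp add: ev3_def Lvar_def map_poly_pCons)
lemma ev3_L3: "ev3 (Lvar 3) x y z = z" by (simp add: ev3_def Lvar_def map_poly_pCons)

lemma ev3_T: "ev3 (Tcls n) x y z = x + y + z - x ^ (n-2) - 1"
  by (simp add: Tcls_def ev3_add ev3_diff ev3_pow ev3_1 ev3_L1 ev3_L1[simplified] ev3_L2 ev3_L3)

lemma ev3_sigma: "ev3 ((sigma n ^^ s) b) x y z = ev3 (Tcls n) x y z ^ s * ev3 b x y z"
  by (induct s) (simp_all add: sigma_def ev3_mult)


lemma exp_pair: "exp (of_real pi * \<i> * of_real (1/2 - x)) + exp (of_real pi * \<i> * of_real (x - 1/2))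
   = 2 * complex_of_real (sin (pi * x))"
proof -
  have "exp (of_real pi * \<i> * of_real (1/2 - x)) = cis (pi * (1/2 - x))"
    by (simp add: cis_conv_exp mult_ac)
  moreover have "exp (of_real pi * \<i> * of_real (x - 1/2)) = cis (- (pi * (1/2 - x)))"
    by (simp add: cis_conv_exp mult_ac algebra_simps)
  moreover have "cos (pi * (1/2 - x)) = sin (pi * x)"
    by (simp add: right_diff_distrib cos_diff)
  ultimately show ?thesis by (simp add: complex_eq_iff cis.ctr)
qed

lemma key_gamma:
  assumes "0 < x" "x < 1"
  shows "Gamma (complex_of_real (1 - x)) * Gamma (complex_of_real x) *
     (exp (of_real pi * \<i> * of_real (1/2 - x)) + exp (of_real pi * \<i> * of_real (x - 1/2)))
     = 2 * of_real pi"
proof -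
  have s: "sin (pi * x) > 0" using assms by (intro sin_gt_zero) auto
  have "Gamma (complex_of_real x) * Gamma (1 - complex_of_real x) = of_real pi / sin (of_real pi * of_real x)"
    by (rule Gamma_reflection_complex)
  also have "sin (of_real pi * of_real x) = complex_of_real (sin (pi * x))"
    by (simp flip: sin_of_real)
  finally have g: "Gamma (complex_of_real (1 - x)) * Gamma (complex_of_real x) = of_real pi / complex_of_real (sin (pi * x))"
    by (simp add: mult.commute)
  show ?thesis unfolding exp_pair g using s by (simp add: field_simps)
qed



lemma e_half: "exp (complex_of_real pi * \<i> / 2) = \<i>"
proof -
  have "exp (complex_of_real pi * \<i> / 2) = cis (pi/2)" by (simp add: cis_conv_exp mult_ac)
  then show ?thesis by simp
qed

lemma e_mhalf: "exp (- (complex_of_real pi * \<i> / 2)) = - \<i>"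
proof -
  have "exp (- (complex_of_real pi * \<i> / 2)) = cis (- (pi/2))" by (simp add: cis_conv_exp mult_ac)
  then show ?thesis by simp
qed

lemma ord_pos: "n \<ge> 3 \<Longrightarrow> ord_a n j > 0" by (simp add: ord_a_def)

lemma euler_eq:
  assumes "n \<ge> 3"
  shows "euler n Q a b = (1/(2 * of_real pi)) * (rk a * (- \<i> * (Psi n Q b (0,1) + of_real pi * \<i> * rk b / of_nat (n-2)))
    + Psi n Q a (0,1) * (\<i> * rk b)
    + (\<Sum>j\<in>{1,2,3::nat}. \<Sum>p\<in>{1..<ord_a n j}. (1/of_nat(ord_a n j)) *
        (Gamma (of_real(1 - real p/real(ord_a n j))) * chi n j p a) *
        (exp(of_real pi * \<i> * of_real (real p/real(ord_a n j) - 1/2)) *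
         (Gamma(of_real (real p / real (ord_a n j))) * chi n j (ord_a n j - p) b))))"
proof -
  have S: "(\<Sum>j\<in>{1,2,3::nat}. \<Sum>p\<in>{1..<ord_a n j}. (1/of_nat(ord_a n j)) * Psi n Q a (j,p) *
      expTheta n (expRho n (Psi n Q b)) (j, ord_a n j - p))
    = (\<Sum>j\<in>{1,2,3::nat}. \<Sum>p\<in>{1..<ord_a n j}. (1/of_nat(ord_a n j)) *
        (Gamma (of_real(1 - real p/real(ord_a n j))) * chi n j p a) *
        (exp(of_real pi * \<i> * of_real (real p/real(ord_a n j) - 1/2)) *
         (Gamma(of_real (real p / real (ord_a n j))) * chi n j (ord_a n j - p) b)))"
  proof (intro sum.cong refl)
    fix j p assume j: "j \<in> {1,2,3::nat}" and p: "p \<in> {1..<ord_a n j}"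
    define A where "A = ord_a n j"
    have A0: "A > 0" using ord_pos[OF assms] A_def by simp
    have pA: "1 \<le> p" "p < A" using p A_def by auto
    have r1: "real (A - p) = real A - real p" using pA by simp
    have r2: "1 - real (A - p) / real A = real p / real A" using A0 r1 by (simp add: field_simps)
    have r3: "1/2 - real (A - p) / real A = real p / real A - 1/2" using A0 r1 by (simp add: field_simps)
    have Pa: "Psi n Q a (j,p) = Gamma (of_real(1 - real p/real A)) * chi n j p a"
      using j pA by (auto simp: Psi_def A_def)
    have Pb0: "Psi n Q b (j, A-p) = Gamma (of_real (1 - real (A-p)/real A)) * chi n j (A-p) b"
      using j pA by (auto simp: Psi_def A_def[symmetric])
    have Pb1: "Psi n Q b (j, A-p) = Gamma (of_real (real p/real A)) * chi n j (A-p) b"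
      using Pb0 by (simp only: r2)
    have th: "theta_ev n (j, A-p) = real p / real A - 1/2"
      using j r3 by (auto simp: theta_ev_def A_def)
    have Pb: "expTheta n (expRho n (Psi n Q b)) (j, A - p) =
       exp(of_real pi * \<i> * of_real (real p/real A - 1/2)) * (Gamma(of_real (real p / real A)) * chi n j (A - p) b)"
      using j unfolding expTheta_def expRho_def rho_def th Pb1 by auto
    show "(1/of_nat(ord_a n j)) * Psi n Q a (j,p) * expTheta n (expRho n (Psi n Q b)) (j, ord_a n j - p) =
      (1/of_nat(ord_a n j)) *
        (Gamma (of_real(1 - real p/real(ord_a n j))) * chi n j p a) *
        (exp(of_real pi * \<i> * of_real (real p/real(ord_a n j) - 1/2)) *
         (Gamma(of_real (real p / real (ord_a n j))) * chi n j (ord_a n j - p) b))"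
      using Pa Pb by (simp add: A_def)
  qed
  have P00: "\<And>e. Psi n Q e (0,0) = rk e" by (simp add: Psi_def)
  show ?thesis
    unfolding euler_def Hpair_def S
    by (simp add: expTheta_def expRho_def rho_def theta_ev_def P00 e_half e_mhalf)
qed



lemma term_comb:
  assumes "1 \<le> p" "p < A"
  shows "(1/of_nat A) * (Gamma (of_real(1 - real p/real A)) * ca) *
      (exp(of_real pi * \<i> * of_real (real p/real A - 1/2)) * (Gamma(of_real (real p/real A)) * cb))
    + (1/of_nat A) * (Gamma (of_real(1 - real (A-p)/real A)) * cb) *
      (exp(of_real pi * \<i> * of_real (real (A-p)/real A - 1/2)) * (Gamma(of_real (real (A-p)/real A)) * ca))
    = 2 * of_real pi * ((1/of_nat A) * ca * cb)"
proof -
  define x where "x = real p / real A"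
  have A0: "real A > 0" using assms by simp
  have x01: "0 < x" "x < 1" using assms A0 by (auto simp: x_def field_simps)
  have r: "real (A - p) / real A = 1 - x" using assms A0 by (simp add: x_def of_nat_diff field_simps)
  have s1: "1 - (1 - x) = x" "(1 - x) - 1/2 = 1/2 - x" by simp_all
  define g1 where "g1 = Gamma (complex_of_real (1 - x))"
  define g2 where "g2 = Gamma (complex_of_real x)"
  define e1 where "e1 = exp (of_real pi * \<i> * of_real (1/2 - x))"
  define e2 where "e2 = exp (of_real pi * \<i> * of_real (x - 1/2))"
  have K: "g1 * g2 * (e1 + e2) = 2 * of_real pi" unfolding g1_def g2_def e1_def e2_def
    by (rule key_gamma[OF x01])
  have "(1/of_nat A) * (Gamma (of_real(1 - real p/real A)) * ca) *
      (exp(of_real pi * \<i> * of_real (real p/real A - 1/2)) * (Gamma(of_real (real p/real A)) * cb))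
    + (1/of_nat A) * (Gamma (of_real(1 - real (A-p)/real A)) * cb) *
      (exp(of_real pi * \<i> * of_real (real (A-p)/real A - 1/2)) * (Gamma(of_real (real (A-p)/real A)) * ca))
    = (1/of_nat A) * (g1 * ca) * (e2 * (g2 * cb)) + (1/of_nat A) * (g2 * cb) * (e1 * (g1 * ca))"
    unfolding r s1 x_def[symmetric] g1_def g2_def e1_def e2_def ..
  also have "\<dots> = (1/of_nat A) * ca * cb * (g1 * g2 * (e1 + e2))" by (simp add: algebra_simps)
  also have "\<dots> = 2 * of_real pi * ((1/of_nat A) * ca * cb)" unfolding K by simp
  finally show ?thesis .
qed

lemma reindex_sub: "(\<Sum>p\<in>{1..<A}. f p) = (\<Sum>p\<in>{1..<A::nat}. f (A - p))"
  by (rule sum.reindex_bij_witness[of _ "\<lambda>p. A - p" "\<lambda>p. A - p"]) auto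

lemma ipair_eq:
  assumes "n \<ge> 3"
  shows "ipair n Q a b = rk a * rk b / of_nat (n-2) +
    (\<Sum>j\<in>{1,2,3::nat}. \<Sum>p\<in>{1..<ord_a n j}. (1/of_nat(ord_a n j)) * chi n j p a * chi n j (ord_a n j - p) b)"
proof -
  define F where "F = (\<lambda>a b j p. (1/of_nat(ord_a n j)) *
        (Gamma (of_real(1 - real p/real(ord_a n j))) * chi n j p a) *
        (exp(of_real pi * \<i> * of_real (real p/real(ord_a n j) - 1/2)) *
         (Gamma(of_real (real p / real (ord_a n j))) * chi n j (ord_a n j - p) b)))"
  define U where "U = (\<lambda>a b. rk a * (- \<i> * (Psi n Q b (0,1) + of_real pi * \<i> * rk b / of_nat (n-2)))
    + Psi n Q a (0,1) * (\<i> * rk b))"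
  have E: "\<And>a b. euler n Q a b = (1/(2 * of_real pi)) * (U a b + (\<Sum>j\<in>{1,2,3::nat}. \<Sum>p\<in>{1..<ord_a n j}. F a b j p))"
    unfolding F_def U_def by (rule euler_eq[OF assms])
  have R: "\<And>j. (\<Sum>p\<in>{1..<ord_a n j}. F b a j p) = (\<Sum>p\<in>{1..<ord_a n j}. F b a j (ord_a n j - p))"
    by (rule reindex_sub)
  have C: "F a b j p + F b a j (ord_a n j - p) = 2 * of_real pi * ((1/of_nat(ord_a n j)) * chi n j p a * chi n j (ord_a n j - p) b)"
    if "p \<in> {1..<ord_a n j}" for j p
  proof -
    have "ord_a n j - (ord_a n j - p) = p" using that by auto
    then show ?thesis using term_comb[of p "ord_a n j" "chi n j p a" "chi n j (ord_a n j - p) b"] that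
      unfolding F_def by (simp add: mult_ac)
  qed
  have U2: "U a b + U b a = 2 * of_real pi * (rk a * rk b / of_nat (n-2))"
    unfolding U_def by (simp add: algebra_simps)
  have "ipair n Q a b = (1/(2 * of_real pi)) * ((U a b + U b a) +
      (\<Sum>j\<in>{1,2,3::nat}. \<Sum>p\<in>{1..<ord_a n j}. F a b j p + F b a j (ord_a n j - p)))"
    unfolding ipair_def E R by (simp add: sum.distrib algebra_simps)
  also have "\<dots> = (1/(2 * of_real pi)) * (2 * of_real pi * (rk a * rk b / of_nat (n-2)) +
      (\<Sum>j\<in>{1,2,3::nat}. \<Sum>p\<in>{1..<ord_a n j}. 2 * of_real pi * ((1/of_nat(ord_a n j)) * chi n j p a * chi n j (ord_a n j - p) b)))"
    unfolding U2 using C by (intro arg_cong2[where f="(*)"] arg_cong2[where f="(+)"] refl sum.cong) auto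
  also have "\<dots> = (1/(2 * of_real pi)) * (2 * of_real pi * (rk a * rk b / of_nat (n-2) +
    (\<Sum>j\<in>{1,2,3::nat}. \<Sum>p\<in>{1..<ord_a n j}. (1/of_nat(ord_a n j)) * chi n j p a * chi n j (ord_a n j - p) b)))"
    by (simp only: sum_distrib_left distrib_left)
  also have "\<dots> = rk a * rk b / of_nat (n-2) +
    (\<Sum>j\<in>{1,2,3::nat}. \<Sum>p\<in>{1..<ord_a n j}. (1/of_nat(ord_a n j)) * chi n j p a * chi n j (ord_a n j - p) b)"
    by simp
  finally show ?thesis .
qed



lemma wpow: assumes "a > 0"
  shows "exp (- 2 * of_real pi * \<i> * of_nat q / of_nat a) ^ a = 1"
proof -
  have "exp (- 2 * of_real pi * \<i> * of_nat q / of_nat a) ^ a = exp (of_nat a * (- 2 * of_real pi * \<i> * of_nat q / of_nat a))"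
    by (simp only: exp_of_nat_mult)
  also have "of_nat a * (- 2 * of_real pi * \<i> * of_nat q / of_nat a) = (2 * of_int (- int q) * pi) * \<i>"
    using assms by (simp add: field_simps)
  also have "exp \<dots> = 1" by (rule exp_integer_2pi) simp
  finally show ?thesis .
qed

lemma wne1: assumes "1 \<le> q" "q < a"
  shows "exp (- 2 * of_real pi * \<i> * of_nat q / of_nat a) \<noteq> 1"
proof
  assume "exp (- 2 * of_real pi * \<i> * of_nat q / of_nat a) = 1"
  then obtain m :: int where m: "Im (- 2 * of_real pi * \<i> * of_nat q / of_nat a) = of_int (2 * m) * pi"
    by (auto simp: exp_eq_1)
  have "Im (- 2 * of_real pi * \<i> * of_nat q / of_nat a) = - 2 * pi * real q / real a"
    by (simp add: Im_divide_of_nat)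
  with m have m2: "- 2 * pi * real q / real a = of_int (2 * m) * pi" by simp
  have ra: "real a \<noteq> 0" using assms by simp
  have "- real q / real a = (- 2 * pi * real q / real a) / (2 * pi)" using ra by (simp add: field_simps)
  also have "\<dots> = of_int m" unfolding m2 by simp
  finally have "- real q / real a = of_int m" .
  moreover have "0 < real q / real a" "real q / real a < 1" using assms by auto
  ultimately have "(- 1::real) < of_int m" "of_int m < (0::real)" by linarith+
  then show False by simp
qed

lemma eta_pow: assumes "p < a"
  shows "exp (- 2 * of_real pi * \<i> * of_nat (a - p) / of_nat a) = exp (2 * of_real pi * \<i> / of_nat a) ^ p"
proof (cases "a = 0")
  case True then show ?thesis using assms by simp
next
  case False
  have "- 2 * of_real pi * \<i> * of_nat (a - p) / of_nat a = (2 * of_int (-1) * pi) * \<i> + of_nat p * (2 * of_real pi * \<i> / of_nat a)"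
    using assms False by (simp add: of_nat_diff field_simps)
  then have "exp (- 2 * of_real pi * \<i> * of_nat (a - p) / of_nat a) = exp ((2 * of_int (-1) * pi) * \<i> + of_nat p * (2 * of_real pi * \<i> / of_nat a))"
    by (rule arg_cong)
  also have "\<dots> = exp ((2 * of_int (-1) * pi) * \<i>) * exp (of_nat p * (2 * of_real pi * \<i> / of_nat a))"
    by (rule exp_add)
  also have "exp ((2 * of_int (-1) * pi) * \<i>) = 1" by (rule exp_integer_2pi) simp
  finally show ?thesis by (simp only: exp_of_nat_mult mult_1)
qed




lemma chiv_pow: assumes "n \<ge> 3" shows "chiv n j q j ^ ord_a n j = 1"
proof -
  have "chiv n j q j = exp (- 2 * of_real pi * \<i> * of_nat q / of_nat (ord_a n j))"
    by (simp only: chiv_def refl if_True)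
  then show ?thesis using wpow[OF ord_pos[OF assms]] by simp
qed

lemma chiT:
  assumes "n \<ge> 3" "j \<in> {1,2,3}" "1 \<le> q" "q < ord_a n j"
  shows "chi n j q (Tcls n) = chiv n j q j"
proof -
  have w: "chiv n j q j ^ ord_a n j = 1" by (rule chiv_pow[OF assms(1)])
  show ?thesis using assms w unfolding chi_def ev3_T
    by (auto simp: chiv_def ord_a_def)
qed

lemma chi_sigma: "chi n j q ((sigma n ^^ s) b) = chi n j q (Tcls n) ^ s * chi n j q b"
  unfolding chi_def by (rule ev3_sigma)

lemma rk_sigma: "rk ((sigma n ^^ s) b) = rk (Tcls n) ^ s * rk b"
  unfolding rk_def by (rule ev3_sigma)

lemma rkT: "rk (Tcls n) = 1" unfolding rk_def ev3_T by simp

lemma chi_tw: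
  assumes "n \<ge> 3" "j \<in> {1,2,3}" "1 \<le> q" "q < ord_a n j"
  shows "chi n j q (beta_tw n b) = chi n j q b"
proof -
  define w where "w = chiv n j q j"
  have wa: "w ^ ord_a n j = 1" unfolding w_def by (rule chiv_pow[OF assms(1)])
  have w1: "w \<noteq> 1" unfolding w_def chiv_def using assms wne1[of q "ord_a n j"] by simp
  obtain k where k: "kappa n = ord_a n j * k"
    using assms by (auto simp: kappa_def ord_a_def)
  have wk: "w ^ kappa n = 1" unfolding k power_mult wa by simp
  have S: "(\<Sum>s<kappa n. w ^ s) = 0" using w1 wk by (simp add: geometric_sum)
  have "chi n j q (beta_tw n b) = chi n j q b - (1 / of_nat (kappa n)) * (\<Sum>s<kappa n. w ^ s * chi n j q b)"
    unfolding beta_tw_def beta0_def chi_def ev3_diff ev3_mult ev3_cst ev3_sum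
    using chi_sigma[unfolded chi_def] chiT[OF assms] unfolding w_def chi_def by simp
  also have "\<dots> = chi n j q b" by (simp add: sum_distrib_right[symmetric] S)
  finally show ?thesis .
qed

lemma rk_tw:
  assumes "n \<ge> 3"
  shows "rk (beta_tw n b) = 0"
proof -
  have kp: "kappa n > 0" using assms by (simp add: kappa_def)
  have "rk (beta_tw n b) = rk b - (1 / of_nat (kappa n)) * (\<Sum>s<kappa n. rk b)"
    unfolding beta_tw_def beta0_def rk_def ev3_diff ev3_mult ev3_cst ev3_sum
    using rk_sigma[unfolded rk_def] rkT[unfolded rk_def] by simp
  also have "\<dots> = 0" using kp by simp
  finally show ?thesis .
qed

theorem lemma8:
  fixes n s :: nat and Q :: real and \<alpha> \<beta> :: kpoly
  assumes "n \<ge> 3" and "Q > 0"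
  shows "ipair n Q \<alpha> ((sigma n ^^ s) (beta_tw n \<beta>)) =
    (\<Sum>j\<in>{1,2,3::nat}. \<Sum>p\<in>{1..<ord_a n j}.
       (1 / of_nat (ord_a n j)) * eta n j ^ (p * s) * chi n j p \<alpha> * chi n j (ord_a n j - p) \<beta>)"
proof -
  have rk0: "rk ((sigma n ^^ s) (beta_tw n \<beta>)) = 0"
    by (simp add: rk_sigma rk_tw[OF assms(1)])
  have C: "chi n j (ord_a n j - p) ((sigma n ^^ s) (beta_tw n \<beta>)) = eta n j ^ (p * s) * chi n j (ord_a n j - p) \<beta>"
    if j: "j \<in> {1,2,3}" and p: "p \<in> {1..<ord_a n j}" for j p
  proof -
    have q: "1 \<le> ord_a n j - p" "ord_a n j - p < ord_a n j" using p by auto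
    have "chiv n j (ord_a n j - p) j = eta n j ^ p"
      unfolding chiv_def eta_def using eta_pow[of p "ord_a n j"] p by simp
    then show ?thesis
      by (simp add: chi_sigma chiT[OF assms(1) j q] chi_tw[OF assms(1) j q] power_mult)
  qed
  show ?thesis
    unfolding ipair_eq[OF assms(1)] rk0
    using C by (auto intro!: sum.cong simp: mult_ac)
qed

end
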